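(* Let $\mathcal{A} \in \{\text{GS}, \text{DFS}, \text{LDFS}, \text{MCS}, \text{MNS}\}$ and let $v$ be a vertex of a finite, simple, undirected, connected graph $G$ with at least two vertices. The following are equivalent: (i) $v$ is the $\mathcal{L}$-root leaf of some $\mathcal{A}$-ordering of $G$; (ii) $v$ is an $\mathcal{L}$-leaf of some $\mathcal{A}$-ordering of $G$; (iii) $v$ is not a cut vertex of $G$.
   Context: A vertex ordering of $G$ is a bijection $\sigma:\{1,\dots,n\}\to V(G)$; $u \prec_\sigma w$ means $u$ comes before $w$. Searches are defined by the following label search: initially every vertex has label $\emptyset$; for $i=1,\dots,n$, choose any unnumbered vertex $x$ such that there is no unnumbered $y$ with $\mathrm{label}(x) \prec_{\mathcal{A}} \mathrm{label}(y)$, set $\sigma(i)=x$, and add $i$ to the labels of all unnumbered neighbors of $x$. The orderings produced are the $\mathcal{A}$-orderings. The strict partial orders on finite subsets of positive integers are: GS: $A \prec B$ iff $A=\emptyset$ and $B\neq\emptyset$. DFS: $A \prec B$ iff ($A=\emptyset$, $B\neq\emptyset$) or $\max(A)<\max(B)$. LDFS: $A \prec B$ iff $A\subsetneq B$ or $\max(A\setminus B)<\max(B\setminus A)$. MCS: $A\prec B$ iff $|A|<|B|$. MNS: $A \prec B$ iff $A \subsetneq B$. For a GS ordering $\sigma$ of connected $G$, the $\mathcal{L}$-tree of $\sigma$ is the spanning tree containing, for each vertex $v\neq\sigma(1)$, the edge from $v$ to its rightmost neighbor $w$ with $w\prec_\sigma v$. A vertex is an $\mathcal{L}$-leaf of $\sigma$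 if it is a leaf of the $\mathcal{L}$-tree; it is the $\mathcal{L}$-root leaf if additionally it equals $\sigma(1)$. *)

theory Defs
  imports Main
begin

definition simple_graph :: "'a set \<Rightarrow> ('a \<Rightarrow> 'a \<Rightarrow> bool) \<Rightarrow> bool" where
  "simple_graph V E \<longleftrightarrow> finite V \<and> (\<forall>x y. E x y \<longrightarrow> E y x) \<and> (\<forall>x. \<not> E x x)
     \<and> (\<forall>x y. E x y \<longrightarrow> x \<in> V \<and> y \<in> V)"

definition connected_graph :: "'a set \<Rightarrow> ('a \<Rightarrow> 'a \<Rightarrow> bool) \<Rightarrow> bool" where
  "connected_graph V E \<longleftrightarrow>
     (\<forall>x\<in>V. \<forall>y\<in>V. (\<lambda>a b. E a b \<and> a \<in> V \<and> b \<in> V)\<^sup>*\<^sup>* x y)"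

definition cut_vertex :: "'a set \<Rightarrow> ('a \<Rightarrow> 'a \<Rightarrow> bool) \<Rightarrow> 'a \<Rightarrow> bool" where
  "cut_vertex V E v \<longleftrightarrow> v \<in> V \<and> \<not> connected_graph (V - {v}) (\<lambda>a b. E a b \<and> a \<noteq> v \<and> b \<noteq> v)"

datatype search = GS | DFS | LDFS | MCS | MNS

fun label_prec :: "search \<Rightarrow> nat set \<Rightarrow> nat set \<Rightarrow> bool" where
  "label_prec GS A B \<longleftrightarrow> A = {} \<and> B \<noteq> {}"
| "label_prec DFS A B \<longleftrightarrow> (A = {} \<and> B \<noteq> {}) \<or> (A \<noteq> {} \<and> B \<noteq> {} \<and> Max A < Max B)"
| "label_prec LDFS A B \<longleftrightarrow> A \<subset> B \<or>
      (A - B \<noteq> {} \<and> B - A \<noteq> {} \<and> Max (A - B) < Max (B - A))"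
| "label_prec MCS A B \<longleftrightarrow> card A < card B"
| "label_prec MNS A B \<longleftrightarrow> A \<subset> B"

text \<open>Orderings are lists; sigma(i) = sigma ! (i-1). At step i (1-based), the label of an
  unnumbered vertex x is the set of numbers j < i with sigma(j) adjacent to x.\<close>
definition search_label :: "('a \<Rightarrow> 'a \<Rightarrow> bool) \<Rightarrow> 'a list \<Rightarrow> nat \<Rightarrow> 'a \<Rightarrow> nat set" where
  "search_label E \<sigma> i x = {j. 1 \<le> j \<and> j < i \<and> E (\<sigma> ! (j - 1)) x}"

definition is_search_ordering ::
  "search \<Rightarrow> 'a set \<Rightarrow> ('a \<Rightarrow> 'a \<Rightarrow> bool) \<Rightarrow> 'a list \<Rightarrow> bool" where
  "is_search_ordering S V E \<sigma> \<longleftrightarrow> distinct \<sigma> \<and> set \<sigma> = V \<and>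
     (\<forall>i\<in>{1..length \<sigma>}. \<forall>y \<in> set (drop i \<sigma>).
        \<not> label_prec S (search_label E \<sigma> i (\<sigma> ! (i - 1))) (search_label E \<sigma> i y))"

definition pos :: "'a list \<Rightarrow> 'a \<Rightarrow> nat" where
  "pos \<sigma> w = (LEAST j. j < length \<sigma> \<and> \<sigma> ! j = w)"

definition L_parent :: "('a \<Rightarrow> 'a \<Rightarrow> bool) \<Rightarrow> 'a list \<Rightarrow> 'a \<Rightarrow> 'a" where
  "L_parent E \<sigma> w = \<sigma> ! (Max {j. j < pos \<sigma> w \<and> E (\<sigma> ! j) w})"

definition L_tree_edges :: "('a \<Rightarrow> 'a \<Rightarrow> bool) \<Rightarrow> 'a list \<Rightarrow> 'a set set" where
  "L_tree_edges E \<sigma> = {{w, L_parent E \<sigma> w} | w. w \<in> set \<sigma> \<and> w \<noteq> hd \<sigma>}"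

definition L_leaf :: "('a \<Rightarrow> 'a \<Rightarrow> bool) \<Rightarrow> 'a list \<Rightarrow> 'a \<Rightarrow> bool" where
  "L_leaf E \<sigma> v \<longleftrightarrow> v \<in> set \<sigma> \<and> card {e \<in> L_tree_edges E \<sigma>. v \<in> e} = 1"

definition L_root_leaf :: "('a \<Rightarrow> 'a \<Rightarrow> bool) \<Rightarrow> 'a list \<Rightarrow> 'a \<Rightarrow> bool" where
  "L_root_leaf E \<sigma> v \<longleftrightarrow> L_leaf E \<sigma> v \<and> v = hd \<sigma>"

end

theory Submission
  imports Defs
begin


lemma lp_sub: "finite A \<Longrightarrow> B \<subseteq> A \<Longrightarrow> \<not> label_prec S A B"
  by (cases S) (auto simp: card_mono leD dest: Max_mono)

lemma lp_empty: "finite B \<Longrightarrow> B \<noteq> {} \<Longrightarrow> label_prec S {} B"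
  by (cases S) auto

lemma lp_mono:
  assumes "finite A" "finite B" "\<forall>j\<in>B. 1 \<le> j" "label_prec S A B" "\<exists>j\<in>A. 2 \<le> (j::nat)"
  shows "\<exists>j\<in>B. 2 \<le> j"
proof (cases S)
  case GS then show ?thesis using assms by auto
next
  case DFS then show ?thesis using assms
    by (metis Max_ge Max_in empty_iff label_prec.simps(2) le_less_trans less_imp_le_nat)
next
  case MNS then show ?thesis using assms by auto
next
  case LDFS
  show ?thesis
  proof (cases "A \<subset> B")
    case True then show ?thesis using assms by auto
  next
    case False
    then have h: "A - B \<noteq> {}" "B - A \<noteq> {}" "Max (A - B) < Max (B - A)" using assms LDFS by auto
    obtain j where j: "j \<in> A" "2 \<le> j" using assms by auto
    show ?thesis
    proof (cases "j \<in> B")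
      case True then show ?thesis using j by auto
    next
      case False
      then have "j \<le> Max (A - B)" using j assms by auto
      moreover have "Max (B - A) \<in> B" using h assms by (meson DiffD1 Max_in finite_Diff)
      ultimately show ?thesis using h j by (meson le_less_trans less_imp_le_nat)
    qed
  qed
next
  case MCS
  then have "card A < card B" using assms by auto
  moreover have "card A \<ge> 1" using assms by (metis One_nat_def Suc_leI card_gt_0_iff empty_iff)
  ultimately have c: "card B \<ge> 2" by auto
  show ?thesis
  proof (rule ccontr)
    assume "\<not> ?thesis"
    then have "B \<subseteq> {1}" using assms(3) by force
    then have "card B \<le> 1" using card_mono[of "{1::nat}" B] by simp
    then show False using c by auto
  qed
qed

fun fm :: "search \<Rightarrow> nat set \<Rightarrow> nat" where
  "fm DFS A = (if A = {} then 0 else Suc (Max A))"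
| "fm LDFS A = (\<Sum>j\<in>A. 2^j)"
| "fm _ A = card A"

lemma sum_pow_lt: "(\<Sum>j<m. (2::nat)^j) < 2^m"
  by (induction m) auto

lemma sum_sub_lt: "finite C \<Longrightarrow> C \<subseteq> {..<m} \<Longrightarrow> (\<Sum>j\<in>C. (2::nat)^j) < 2^m"
  by (meson finite_lessThan le_less_trans sum_mono2 sum_pow_lt zero_le)

lemma ldfs_fm:
  assumes "finite A" "finite B" "label_prec LDFS A B"
  shows "(\<Sum>j\<in>A. (2::nat)^j) < (\<Sum>j\<in>B. 2^j)"
proof (cases "A \<subset> B")
  case True
  then have "(\<Sum>j\<in>B. (2::nat)^j) = (\<Sum>j\<in>A. 2^j) + (\<Sum>j\<in>B - A. 2^j)"
    using assms by (metis add.commute psubset_imp_subset sum.subset_diff)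
  moreover have "(\<Sum>j\<in>B - A. (2::nat)^j) > 0" using True assms
    by (intro sum_pos) auto
  ultimately show ?thesis by auto
next
  case False
  then have h: "A - B \<noteq> {}" "B - A \<noteq> {}" "Max (A - B) < Max (B - A)" using assms by auto
  define m where "m = Max (B - A)"
  have m: "m \<in> B - A" using h assms m_def by (metis Max_in finite_Diff)
  have sub: "A - B \<subseteq> {..<m}"
  proof
    fix x assume "x \<in> A - B"
    then have "x \<le> Max (A - B)" using assms by (intro Max_ge) auto
    then show "x \<in> {..<m}" using h m_def by auto
  qed
  have "(\<Sum>j\<in>A. (2::nat)^j) = (\<Sum>j\<in>A \<inter> B. 2^j) + (\<Sum>j\<in>A - B. 2^j)"
    using assms by (metis Diff_Diff_Int Diff_subset add.commute inf_commute sum.subset_diff)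
  also have "\<dots> < (\<Sum>j\<in>A \<inter> B. 2^j) + 2^m" using sum_sub_lt[OF _ sub] assms by auto
  also have "\<dots> \<le> (\<Sum>j\<in>A \<inter> B. 2^j) + (\<Sum>j\<in>B - A. 2^j)"
    using m assms by (simp add: member_le_sum)
  also have "\<dots> = (\<Sum>j\<in>B. 2^j)"
    using assms by (metis Diff_Diff_Int Diff_subset add.commute inf.commute sum.subset_diff inf_commute)
  finally show ?thesis .
qed

lemma lp_fm: "fm S A < fm S B" if "finite A" "finite B" "label_prec S A B"
proof (cases S)
  case GS then show ?thesis using that by (simp add: card_gt_0_iff)
next
  case DFS then show ?thesis using that by (auto split: if_splits simp del: Max_less_iff)
next
  case LDFS then show ?thesis using that ldfs_fm by simp
next
  case MCS then show ?thesis using that by simp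
next
  case MNS then show ?thesis using that by (simp add: psubset_card_mono)
qed

lemma crossing:
  assumes "R\<^sup>*\<^sup>* a b" "a \<in> A" "b \<notin> A"
  shows "\<exists>x y. R x y \<and> x \<in> A \<and> y \<notin> A"
  using assms by (induction rule: rtranclp_induct) auto

lemma sym_rtranclp:
  assumes "\<And>x y. R x y \<Longrightarrow> R y x" "R\<^sup>*\<^sup>* x y"
  shows "R\<^sup>*\<^sup>* y x"
  using assms(2) by (induction rule: rtranclp_induct) (auto intro: converse_rtranclp_into_rtranclp assms(1))

lemma label_fin: "finite (search_label E \<sigma> i x)"
  unfolding search_label_def by (rule finite_subset[of _ "{..<i}"]) auto

lemma label_ge1: "j \<in> search_label E \<sigma> i x \<Longrightarrow> 1 \<le> j"
  by (simp add: search_label_def)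

lemma label_app: "i \<le> Suc (length \<tau>) \<Longrightarrow> search_label E (\<tau> @ \<rho>) i z = search_label E \<tau> i z"
  unfolding search_label_def by (auto simp: nth_append)

lemma nth_in_take: "distinct xs \<Longrightarrow> k < length xs \<Longrightarrow> (xs!k \<in> set (take m xs)) = (k < m)"
  by (auto simp: in_set_conv_nth nth_eq_iff_index_eq)

lemma in_drop: "y \<in> set xs \<Longrightarrow> y \<notin> set (take i xs) \<Longrightarrow> y \<in> set (drop i xs)"
  by (metis Un_iff append_take_drop_id set_append)

lemma notin_take: "distinct xs \<Longrightarrow> y \<in> set (drop i xs) \<Longrightarrow> y \<notin> set (take i xs)"
  by (metis append_take_drop_id distinct_append disjoint_iff)

lemma label_nonempty:
  assumes so: "is_search_ordering S V E \<sigma>" and cg: "connected_graph V E"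
    and i: "2 \<le> i" "i \<le> length \<sigma>"
  shows "search_label E \<sigma> i (\<sigma>!(i-1)) \<noteq> {}"
proof -
  have d: "distinct \<sigma>" and sV: "set \<sigma> = V" using so by (auto simp: is_search_ordering_def)
  let ?A = "set (take (i-1) \<sigma>)"
  have a: "\<sigma>!0 \<in> ?A" using nth_in_take[OF d, of 0 "i-1"] i by (cases \<sigma>) auto
  have b: "\<sigma>!(i-1) \<notin> ?A" using nth_in_take[OF d, of "i-1" "i-1"] i by simp
  have "(\<lambda>a b. E a b \<and> a \<in> V \<and> b \<in> V)\<^sup>*\<^sup>* (\<sigma>!0) (\<sigma>!(i-1))"
  proof -
    have "\<sigma>!0 \<in> V" "\<sigma>!(i-1) \<in> V" using sV i by (auto intro!: nth_mem)
    then show ?thesis using cg unfolding connected_graph_def by blast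
  qed
  from crossing[OF this a b] obtain x y where xy: "E x y" "x \<in> ?A" "y \<notin> ?A" "y \<in> V" by auto
  from xy(2) obtain j0 where j0: "j0 < i - 1" "x = \<sigma>!j0" by (auto simp: in_set_conv_nth)
  have lab: "Suc j0 \<in> search_label E \<sigma> i y" using j0 xy by (auto simp: search_label_def)
  have "y \<in> set (drop (i-1) \<sigma>)" using in_drop[of y \<sigma> "i-1"] xy sV by auto
  moreover have "drop (i-1) \<sigma> = \<sigma>!(i-1) # drop i \<sigma>" using i
    using Cons_nth_drop_Suc[of "i-1" \<sigma>] by simp
  ultimately have "y = \<sigma>!(i-1) \<or> y \<in> set (drop i \<sigma>)" by auto
  then show ?thesis
  proof
    assume "y = \<sigma>!(i-1)" then show ?thesis using lab by auto
  next
    assume y: "y \<in> set (drop i \<sigma>)"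
    have "i \<in> {1..length \<sigma>}" using i by auto
    then have nlp: "\<not> label_prec S (search_label E \<sigma> i (\<sigma>!(i-1))) (search_label E \<sigma> i y)"
      using so y unfolding is_search_ordering_def by blast
    have "search_label E \<sigma> i y \<noteq> {}" using lab by auto
    then have "label_prec S {} (search_label E \<sigma> i y)" by (rule lp_empty[OF label_fin])
    then show ?thesis using nlp by auto
  qed
qed

lemma pos_nth: "distinct \<sigma> \<Longrightarrow> k < length \<sigma> \<Longrightarrow> pos \<sigma> (\<sigma>!k) = k"
  unfolding pos_def by (rule Least_equality) (auto simp: nth_eq_iff_index_eq)

lemma parent_nth:
  assumes "distinct \<sigma>" "k < length \<sigma>" "j0 < k" "E (\<sigma>!j0) (\<sigma>!k)"
  shows "\<exists>m. L_parent E \<sigma> (\<sigma>!k) = \<sigma>!m \<and> m < k \<and> E (\<sigma>!m) (\<sigma>!k) \<and> j0 \<le> m"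
proof -
  let ?J = "{j. j < k \<and> E (\<sigma>!j) (\<sigma>!k)}"
  have f: "finite ?J" by (rule finite_subset[of _ "{..<k}"]) auto
  have ne: "j0 \<in> ?J" using assms by auto
  have "Max ?J \<in> ?J" using f ne by (intro Max_in) auto
  moreover have "j0 \<le> Max ?J" using f ne by (intro Max_ge)
  moreover have "L_parent E \<sigma> (\<sigma>!k) = \<sigma>!(Max ?J)" unfolding L_parent_def using pos_nth[OF assms(1,2)] by simp
  ultimately show ?thesis by auto
qed

lemma parent_so:
  assumes so: "is_search_ordering S V E \<sigma>" and cg: "connected_graph V E" and k: "1 \<le> k" "k < length \<sigma>"
  shows "\<exists>m. L_parent E \<sigma> (\<sigma>!k) = \<sigma>!m \<and> m < k \<and> E (\<sigma>!m) (\<sigma>!k)"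
proof -
  have d: "distinct \<sigma>" using so by (auto simp: is_search_ordering_def)
  from label_nonempty[OF so cg, of "Suc k"] k obtain j where "j \<in> search_label E \<sigma> (Suc k) (\<sigma>!k)" by auto
  then have "j - 1 < k" "E (\<sigma>!(j-1)) (\<sigma>!k)" by (auto simp: search_label_def)
  then show ?thesis using parent_nth[OF d k(2)] by blast
qed



lemma leaf_not_cut:
  assumes so: "is_search_ordering S V E \<sigma>" and sg: "simple_graph V E" and cg: "connected_graph V E"
    and lf: "L_leaf E \<sigma> v"
  shows "connected_graph (V - {v}) (\<lambda>a b. E a b \<and> a \<noteq> v \<and> b \<noteq> v)"
proof -
  define R where "R = (\<lambda>a b. (E a b \<and> a \<noteq> v \<and> b \<noteq> v) \<and> a \<in> V - {v} \<and> b \<in> V - {v})"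
  have d: "distinct \<sigma>" and sV: "set \<sigma> = V" using so by (auto simp: is_search_ordering_def)
  have vV: "v \<in> set \<sigma>" using lf by (simp add: L_leaf_def)
  then have ne: "\<sigma> \<noteq> []" by auto
  define r where "r = hd \<sigma>"
  have r0: "r = \<sigma>!0" using ne r_def by (simp add: hd_conv_nth)
  have rV: "r \<in> set \<sigma>" using ne r_def by simp
  define p where "p = L_parent E \<sigma>"
  define ES where "ES = {e \<in> L_tree_edges E \<sigma>. v \<in> e}"
  have ES1: "card ES = 1" using lf by (simp add: L_leaf_def ES_def)
  then obtain e0 where e0: "ES = {e0}" by (meson card_1_singletonE)
  have edge: "{w, p w} \<in> L_tree_edges E \<sigma>" if "w \<in> set \<sigma>" "w \<noteq> r" for w
    using that unfolding L_tree_edges_def p_def r_def by blast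
  have symE: "E a b \<Longrightarrow> E b a" for a b using sg by (simp add: simple_graph_def)
  have Rsym: "R a b \<Longrightarrow> R b a" for a b using symE by (auto simp: R_def)
  have reach: "k < length \<sigma> \<longrightarrow> \<sigma>!k \<noteq> v \<longrightarrow> (\<exists>z. R\<^sup>*\<^sup>* (\<sigma>!k) z \<and> z \<in> V - {v} \<and>
      (z = r \<or> (z \<noteq> r \<and> z \<in> set \<sigma> \<and> p z = v)))" for k
  proof (induction k rule: less_induct)
    case (less k)
    show ?case
    proof (intro impI)
      assume k: "k < length \<sigma>" "\<sigma>!k \<noteq> v"
      have kV: "\<sigma>!k \<in> V - {v}" using k sV nth_mem by blast
      show "\<exists>z. R\<^sup>*\<^sup>* (\<sigma>!k) z \<and> z \<in> V - {v} \<and> (z = r \<or> (z \<noteq> r \<and> z \<in> set \<sigma> \<and> p z = v))"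
      proof (cases "k = 0")
        case True
        then have "\<sigma>!k = r" using r0 by simp
        moreover have "R\<^sup>*\<^sup>* (\<sigma>!k) (\<sigma>!k)" by simp
        ultimately show ?thesis using kV by blast
      next
        case False
        then obtain m where m: "p (\<sigma>!k) = \<sigma>!m" "m < k" "E (\<sigma>!m) (\<sigma>!k)"
          using parent_so[OF so cg, of k] k p_def by auto
        show ?thesis
        proof (cases "\<sigma>!m = v")
          case True
          have l0: "0 < length \<sigma>" using ne by simp
          have "\<sigma>!k \<noteq> r" using nth_eq_iff_index_eq[OF d k(1) l0] r0 \<open>k \<noteq> 0\<close> by simp
          moreover have "R\<^sup>*\<^sup>* (\<sigma>!k) (\<sigma>!k)" by simp
          moreover have "\<sigma>!k \<in> set \<sigma>" using k by simp
          moreover have "p (\<sigma>!k) = v" using m True by simp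
          ultimately show ?thesis using kV by blast
        next
          case False
          obtain z where z: "R\<^sup>*\<^sup>* (\<sigma>!m) z" "z \<in> V - {v}" "z = r \<or> (z \<noteq> r \<and> z \<in> set \<sigma> \<and> p z = v)"
            using less.IH[of m] m k False by auto
          have "\<sigma>!m \<in> V" using m k sV by auto
          then have "R (\<sigma>!k) (\<sigma>!m)" using symE m k False kV unfolding R_def by auto
          then have "R\<^sup>*\<^sup>* (\<sigma>!k) z" using z(1) by (rule converse_rtranclp_into_rtranclp)
          then show ?thesis using z(2,3) by blast
        qed
      qed
    qed
  qed
  have reach': "\<exists>z. R\<^sup>*\<^sup>* x z \<and> z \<in> V - {v} \<and> (z = r \<or> (z \<noteq> r \<and> z \<in> set \<sigma> \<and> p z = v))"
    if "x \<in> V - {v}" for x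
  proof -
    have xs: "x \<in> set \<sigma>" using that sV by simp
    obtain k where k: "k < length \<sigma>" "\<sigma>!k = x" using xs by (metis in_set_conv_nth)
    have "\<sigma>!k \<noteq> v" using that k(2) by simp
    then obtain z where "R\<^sup>*\<^sup>* (\<sigma>!k) z \<and> z \<in> V - {v} \<and> (z = r \<or> (z \<noteq> r \<and> z \<in> set \<sigma> \<and> p z = v))"
      using reach[of k] k(1) by blast
    then show ?thesis unfolding k(2) by blast
  qed
  have tgt: "\<exists>t. \<forall>x \<in> V - {v}. R\<^sup>*\<^sup>* x t"
  proof (cases "v = r")
    case True
    have uniq: "z1 = z2" if "z1 \<in> V - {v}" "z1 \<in> set \<sigma>" "p z1 = v" "z2 \<in> V - {v}" "z2 \<in> set \<sigma>" "p z2 = v" for z1 z2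
    proof -
      have "{z1, v} \<in> ES" using edge[of z1] that True unfolding ES_def by auto
      moreover have "{z2, v} \<in> ES" using edge[of z2] that True unfolding ES_def by auto
      ultimately have "{z1, v} = {z2, v}" using e0 by auto
      then show ?thesis using that by (metis doubleton_eq_iff)
    qed
    show ?thesis
    proof (cases "V - {v} = {}")
      case True then show ?thesis by auto
    next
      case False
      then obtain x0 where x0: "x0 \<in> V - {v}" by auto
      obtain z0 where z0: "R\<^sup>*\<^sup>* x0 z0" "z0 \<in> V - {v}" "z0 \<in> set \<sigma>" "p z0 = v"
        using reach'[OF x0] True by auto
      have "R\<^sup>*\<^sup>* x z0" if xin: "x \<in> V - {v}" for x
      proof -
        obtain z where z: "R\<^sup>*\<^sup>* x z" "z \<in> V - {v}" "z \<in> set \<sigma>" "p z = v"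
          using reach'[OF xin] True by auto
        then show ?thesis using uniq[of z z0] z0 by auto
      qed
      then show ?thesis by blast
    qed
  next
    case False
    have nochild: False if "z \<in> V - {v}" "z \<noteq> r" "z \<in> set \<sigma>" "p z = v" for z
    proof -
      have "{z, v} \<in> ES" using edge[of z] that unfolding ES_def by auto
      moreover have "{v, p v} \<in> ES" using edge[of v] vV False unfolding ES_def by auto
      ultimately have "{z, v} = {v, p v}" using e0 by auto
      then have zp: "z = p v" using that by (metis doubleton_eq_iff)
      obtain kv where kv: "kv < length \<sigma>" "v = \<sigma>!kv" using vV by (auto simp: in_set_conv_nth)
      have "kv \<noteq> 0"
      proof
        assume "kv = 0" then show False using kv False r0 by simp
      qed
      then obtain m where m: "p v = \<sigma>!m" "m < kv" using parent_so[OF so cg, of kv] kv p_def by auto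
      have "m \<noteq> 0"
      proof
        assume "m = 0" then show False using m zp that r0 by simp
      qed
      then obtain m' where m': "p z = \<sigma>!m'" "m' < m" using parent_so[OF so cg, of m] m kv zp p_def by auto
      have "\<sigma>!m' = \<sigma>!kv" using m' that kv by auto
      moreover have "m' < length \<sigma>" using m' m kv by simp
      ultimately have "m' = kv" using nth_eq_iff_index_eq[OF d _ kv(1), of m'] by simp
      then show False using m m' by auto
    qed
    have "R\<^sup>*\<^sup>* x r" if xin: "x \<in> V - {v}" for x
    proof -
      obtain z where z: "R\<^sup>*\<^sup>* x z" "z \<in> V - {v}" "z = r \<or> (z \<noteq> r \<and> z \<in> set \<sigma> \<and> p z = v)"
        using reach'[OF xin] by blast
      have "z = r" using z(2,3) nochild by blast
      then show ?thesis using z(1) by simp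
    qed
    then show ?thesis by blast
  qed
  then obtain t where t: "\<forall>x \<in> V - {v}. R\<^sup>*\<^sup>* x t" by auto
  have "R\<^sup>*\<^sup>* x y" if "x \<in> V - {v}" "y \<in> V - {v}" for x y
  proof -
    have xt: "R\<^sup>*\<^sup>* x t" and yt: "R\<^sup>*\<^sup>* y t" using t that by auto
    have "R\<^sup>*\<^sup>* t y" using sym_rtranclp[of R, OF Rsym yt] .
    with xt show ?thesis by (rule rtranclp_trans)
  qed
  then show ?thesis unfolding connected_graph_def R_def by blast
qed



definition vp :: "search \<Rightarrow> 'a set \<Rightarrow> ('a \<Rightarrow> 'a \<Rightarrow> bool) \<Rightarrow> 'a list \<Rightarrow> bool" where
  "vp S V E \<tau> \<longleftrightarrow> distinct \<tau> \<and> set \<tau> \<subseteq> V \<and> (\<forall>i\<in>{1..length \<tau>}. \<forall>y\<in>V - set (take i \<tau>).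
     \<not> label_prec S (search_label E \<tau> i (\<tau>!(i-1))) (search_label E \<tau> i y))"

definition goodp :: "('a \<Rightarrow> 'a \<Rightarrow> bool) \<Rightarrow> 'a \<Rightarrow> 'a list \<Rightarrow> bool" where
  "goodp E v \<tau> \<longleftrightarrow> 2 \<le> length \<tau> \<and> \<tau>!0 = v \<and> E v (\<tau>!1) \<and>
     (\<forall>k. 2 \<le> k \<and> k < length \<tau> \<longrightarrow> (\<exists>j. 1 \<le> j \<and> j < k \<and> E (\<tau>!j) (\<tau>!k)))"

lemma vp_snoc:
  assumes vp: "vp S V E \<tau>" and x: "x \<in> V" "x \<notin> set \<tau>"
    and mx: "\<forall>y \<in> V - set \<tau> - {x}. \<not> label_prec S (search_label E \<tau> (Suc (length \<tau>)) x) (search_label E \<tau> (Suc (length \<tau>)) y)"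
  shows "vp S V E (\<tau> @ [x])"
  unfolding vp_def
proof (intro conjI ballI)
  show "distinct (\<tau>@[x])" "set (\<tau>@[x]) \<subseteq> V" using vp x by (auto simp: vp_def)
  fix i y assume i: "i \<in> {1..length (\<tau>@[x])}" and y: "y \<in> V - set (take i (\<tau>@[x]))"
  have la: "search_label E (\<tau>@[x]) i z = search_label E \<tau> i z" for z
    using i by (intro label_app) auto
  show "\<not> label_prec S (search_label E (\<tau>@[x]) i ((\<tau>@[x])!(i-1))) (search_label E (\<tau>@[x]) i y)"
  proof (cases "i \<le> length \<tau>")
    case True
    have "take i (\<tau>@[x]) = take i \<tau>" using True by simp
    moreover have "i - 1 < length \<tau>" using True i by auto
    then have "(\<tau>@[x])!(i-1) = \<tau>!(i-1)" by (simp add: nth_append)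
    ultimately have eqs: "take i (\<tau>@[x]) = take i \<tau>" "(\<tau>@[x])!(i-1) = \<tau>!(i-1)" by auto
    have all: "\<forall>i\<in>{1..length \<tau>}. \<forall>y\<in>V - set (take i \<tau>).
     \<not> label_prec S (search_label E \<tau> i (\<tau>!(i-1))) (search_label E \<tau> i y)" using vp unfolding vp_def by blast
    have "i \<in> {1..length \<tau>}" using i True by auto
    moreover have "y \<in> V - set (take i \<tau>)" using y eqs by simp
    ultimately have "\<not> label_prec S (search_label E \<tau> i (\<tau>!(i-1))) (search_label E \<tau> i y)"
      using all by blast
    then show ?thesis using eqs la by simp
  next
    case False
    then have ii: "i = Suc (length \<tau>)" using i by auto
    have "(\<tau>@[x])!(i-1) = x" using ii by simp
    then show ?thesis using mx y ii la by auto
  qed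
qed

lemma extend:
  assumes sg: "simple_graph V E" and cgv: "connected_graph (V - {v}) (\<lambda>a b. E a b \<and> a \<noteq> v \<and> b \<noteq> v)"
    and vp: "vp S V E \<tau>" and gp: "goodp E v \<tau>" and ne: "set \<tau> \<noteq> V"
  shows "\<exists>x. vp S V E (\<tau>@[x]) \<and> goodp E v (\<tau>@[x])"
proof -
  define n where "n = length \<tau>"
  define L where "L = (\<lambda>z. search_label E \<tau> (Suc n) z)"
  define C where "C = {y \<in> V - set \<tau>. \<exists>j\<in>L y. 2 \<le> j}"
  have d: "distinct \<tau>" and sub: "set \<tau> \<subseteq> V" using vp by (auto simp: vp_def)
  have n2: "2 \<le> n" and t0: "\<tau>!0 = v" and eu: "E v (\<tau>!1)" using gp n_def by (auto simp: goodp_def)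
  have finV: "finite V" using sg by (simp add: simple_graph_def)
  obtain b where b: "b \<in> V" "b \<notin> set \<tau>" using ne sub by auto
  have "0 < length \<tau>" using n2 n_def by linarith
  then have vin: "v \<in> set \<tau>" using t0 nth_mem by metis
  have bv: "b \<noteq> v" using b vin by auto
  have uin: "\<tau>!1 \<in> set \<tau>" using n2 n_def by simp
  have "1 < length \<tau>" using n2 n_def by linarith
  moreover have "\<tau> \<noteq> []" using n2 n_def by (cases \<tau>) auto
  ultimately have uv: "\<tau>!1 \<noteq> v" using d t0 nth_eq_iff_index_eq[OF d, of 1 0] by simp
  have uV: "\<tau>!1 \<in> V" using uin sub by auto
  let ?R = "\<lambda>a b. (E a b \<and> a \<noteq> v \<and> b \<noteq> v) \<and> a \<in> V - {v} \<and> b \<in> V - {v}"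
  have cc: "\<forall>x\<in>V-{v}. \<forall>y\<in>V-{v}. ?R\<^sup>*\<^sup>* x y" using cgv unfolding connected_graph_def by simp
  have "\<tau>!1 \<in> V-{v}" "b \<in> V - {v}" using uV uv b bv by auto
  then have "?R\<^sup>*\<^sup>* (\<tau>!1) b" using cc by blast
  from crossing[OF this uin b(2)] obtain x0 y0 where xy: "?R x0 y0" "x0 \<in> set \<tau>" "y0 \<notin> set \<tau>" by blast
  from xy(2) obtain j0 where j0: "j0 < n" "x0 = \<tau>!j0" using n_def by (auto simp: in_set_conv_nth)
  have "j0 \<noteq> 0" using j0 t0 xy(1) by (cases "j0 = 0") auto
  then have "Suc j0 \<in> L y0" "2 \<le> Suc j0" using j0 xy(1) by (auto simp: L_def search_label_def)
  then have "\<exists>j\<in>L y0. 2 \<le> j" by blast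
  then have y0C: "y0 \<in> C" using xy unfolding C_def by auto
  have finC: "finite C" using finV unfolding C_def by auto
  define M where "M = Max ((\<lambda>y. fm S (L y)) ` C)"
  have "M \<in> (\<lambda>y. fm S (L y)) ` C" unfolding M_def using finC y0C by (intro Max_in) auto
  then obtain x where xC: "x \<in> C" and xM: "fm S (L x) = M" by auto
  have le: "fm S (L y) \<le> M" if "y \<in> C" for y unfolding M_def using finC that by (intro Max_ge) auto
  have mx: "\<forall>y \<in> V - set \<tau> - {x}. \<not> label_prec S (L x) (L y)"
  proof (intro ballI notI)
    fix y assume y: "y \<in> V - set \<tau> - {x}" and lp: "label_prec S (L x) (L y)"
    have Lx: "\<exists>j\<in>L x. 2 \<le> j" using xC unfolding C_def by blast
    have g1: "\<forall>j\<in>L y. 1 \<le> j" unfolding L_def search_label_def by auto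
    have "\<exists>j\<in>L y. 2 \<le> j"
      using lp_mono[OF label_fin label_fin g1[unfolded L_def] lp[unfolded L_def] Lx[unfolded L_def]] unfolding L_def .
    then have "y \<in> C" using y unfolding C_def by auto
    then have "fm S (L y) \<le> fm S (L x)" using le xM by auto
    moreover have "fm S (L x) < fm S (L y)" using lp_fm[OF label_fin label_fin lp[unfolded L_def]] unfolding L_def .
    ultimately show False by auto
  qed
  have xV: "x \<in> V" "x \<notin> set \<tau>" using xC unfolding C_def by auto
  have vp': "vp S V E (\<tau>@[x])" using vp_snoc[OF vp xV] mx unfolding L_def n_def by auto
  have gp': "goodp E v (\<tau>@[x])"
    unfolding goodp_def
  proof (intro conjI allI impI)
    show "2 \<le> length (\<tau>@[x])" using n2 n_def by simp
    show "(\<tau>@[x])!0 = v" using n2 n_def t0 by (auto simp add: nth_append)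
    show "E v ((\<tau>@[x])!1)" using n2 n_def eu by (auto simp add: nth_append)
    fix k assume k: "2 \<le> k \<and> k < length (\<tau>@[x])"
    show "\<exists>j\<ge>1. j < k \<and> E ((\<tau>@[x])!j) ((\<tau>@[x])!k)"
    proof (cases "k < n")
      case True
      have "\<forall>k. 2 \<le> k \<and> k < length \<tau> \<longrightarrow> (\<exists>j. 1 \<le> j \<and> j < k \<and> E (\<tau>!j) (\<tau>!k))"
        using gp unfolding goodp_def by blast
      then obtain j where "1 \<le> j" "j < k" "E (\<tau>!j) (\<tau>!k)" using k True n_def by blast
      then have "1 \<le> j \<and> j < k \<and> E ((\<tau>@[x])!j) ((\<tau>@[x])!k)"
        using True n_def by (simp add: nth_append)
      then show ?thesis by blast
    next
      case False
      then have kn: "k = n" using k n_def by auto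
      obtain j where j: "j \<in> L x" "2 \<le> j" using xC unfolding C_def by auto
      then have "j - 1 < n" "E (\<tau>!(j-1)) x" unfolding L_def search_label_def by auto
      moreover have "1 \<le> j - 1" using j by auto
      moreover have "(\<tau>@[x])!(j-1) = \<tau>!(j-1)" using \<open>j - 1 < n\<close> n_def by (simp add: nth_append)
      moreover have "(\<tau>@[x])!k = x" using kn n_def by simp
      ultimately have "1 \<le> j - 1 \<and> j - 1 < k \<and> E ((\<tau>@[x])!(j-1)) ((\<tau>@[x])!k)"
        using kn by simp
      then show ?thesis by blast
    qed
  qed
  show ?thesis using vp' gp' by blast
qed

lemma complete:
  assumes sg: "simple_graph V E" and cgv: "connected_graph (V - {v}) (\<lambda>a b. E a b \<and> a \<noteq> v \<and> b \<noteq> v)"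
  shows "vp S V E \<tau> \<Longrightarrow> goodp E v \<tau> \<Longrightarrow> \<exists>\<sigma>. vp S V E \<sigma> \<and> goodp E v \<sigma> \<and> set \<sigma> = V"
proof (induction "card V - length \<tau>" arbitrary: \<tau> rule: less_induct)
  case less
  show ?case
  proof (cases "set \<tau> = V")
    case True then show ?thesis using less.prems by blast
  next
    case False
    obtain x where x: "vp S V E (\<tau>@[x])" "goodp E v (\<tau>@[x])" using extend[OF sg cgv less.prems False] by blast
    have finV: "finite V" using sg by (simp add: simple_graph_def)
    have dx: "distinct (\<tau>@[x])" and sx: "set (\<tau>@[x]) \<subseteq> V" using x(1) unfolding vp_def by auto
    have "length (\<tau>@[x]) = card (set (\<tau>@[x]))" using distinct_card[OF dx] by simp
    also have "\<dots> \<le> card V" using card_mono[OF finV sx] .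
    finally have "length (\<tau>@[x]) \<le> card V" .
    then have "card V - length (\<tau>@[x]) < card V - length \<tau>" by simp
    then show ?thesis using less.hyps x by blast
  qed
qed



lemma base_vp:
  assumes sg: "simple_graph V E" and vu: "v \<in> V" "u \<in> V" "E v u"
  shows "vp S V E [v, u]" "goodp E v [v, u]"
proof -
  have uv: "u \<noteq> v" using sg vu by (auto simp: simple_graph_def)
  have l1: "search_label E [v,u] 1 z = {}" for z by (auto simp: search_label_def)
  have l2: "search_label E [v,u] 2 z \<subseteq> search_label E [v,u] 2 u" for z
  proof
    fix j assume "j \<in> search_label E [v,u] 2 z"
    then have "j = 1" by (auto simp: search_label_def)
    then show "j \<in> search_label E [v,u] 2 u" using vu by (simp add: search_label_def)
  qed
  show "vp S V E [v, u]" unfolding vp_def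
  proof (intro conjI ballI)
    show "distinct [v,u]" using uv by simp
    show "set [v,u] \<subseteq> V" using vu by simp
    fix i y assume i: "i \<in> {1..length [v,u]}" and y: "y \<in> V - set (take i [v,u])"
    from i have "i = 1 \<or> i = 2" by (auto simp add: le_Suc_eq numeral_2_eq_2)
    then show "\<not> label_prec S (search_label E [v,u] i ([v,u]!(i-1))) (search_label E [v,u] i y)"
    proof
      assume i1: "i = 1"
      have "\<not> label_prec S {} {}" by (rule lp_sub) auto
      then show ?thesis using i1 l1 by simp
    next
      assume i2: "i = 2"
      have "\<not> label_prec S (search_label E [v,u] 2 u) (search_label E [v,u] 2 y)"
        by (rule lp_sub[OF label_fin l2])
      then show ?thesis using i2 by simp
    qed
  qed
  show "goodp E v [v,u]" using vu by (auto simp add: goodp_def)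
qed

lemma root_leaf_exists:
  assumes sg: "simple_graph V E" and cg: "connected_graph V E" and c2: "card V \<ge> 2" and vV: "v \<in> V"
    and cgv: "connected_graph (V - {v}) (\<lambda>a b. E a b \<and> a \<noteq> v \<and> b \<noteq> v)"
  shows "\<exists>\<sigma>. is_search_ordering S V E \<sigma> \<and> L_root_leaf E \<sigma> v"
proof -
  have finV: "finite V" using sg by (simp add: simple_graph_def)
  have "V - {v} \<noteq> {}"
  proof
    assume "V - {v} = {}"
    then have "V = {v}" using vV by auto
    then show False using c2 by simp
  qed
  then obtain b where b: "b \<in> V" "b \<notin> {v}" by auto
  have "(\<lambda>a b. E a b \<and> a \<in> V \<and> b \<in> V)\<^sup>*\<^sup>* v b" using cg vV b unfolding connected_graph_def by blast
  from crossing[OF this _ b(2)] obtain u where u: "E v u" "u \<in> V" by blast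
  obtain \<sigma> where \<sigma>: "vp S V E \<sigma>" "goodp E v \<sigma>" "set \<sigma> = V"
    using complete[OF sg cgv base_vp[OF sg vV u(2) u(1)]] by blast
  have d: "distinct \<sigma>" using \<sigma> by (simp add: vp_def)
  have so: "is_search_ordering S V E \<sigma>"
    unfolding is_search_ordering_def
  proof (intro conjI ballI)
    show "distinct \<sigma>" "set \<sigma> = V" using d \<sigma> by auto
    fix i y assume i: "i \<in> {1..length \<sigma>}" and y: "y \<in> set (drop i \<sigma>)"
    have "y \<in> V - set (take i \<sigma>)" using notin_take[OF d y] y \<sigma>(3) by (meson DiffI in_set_dropD)
    then show "\<not> label_prec S (search_label E \<sigma> i (\<sigma>!(i-1))) (search_label E \<sigma> i y)"
      using \<sigma>(1) i unfolding vp_def by blast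
  qed
  have len: "2 \<le> length \<sigma>" and s0: "\<sigma>!0 = v" and e1: "E v (\<sigma>!1)"
    using \<sigma>(2) by (auto simp: goodp_def)
  have gk: "\<forall>k. 2 \<le> k \<and> k < length \<sigma> \<longrightarrow> (\<exists>j. 1 \<le> j \<and> j < k \<and> E (\<sigma>!j) (\<sigma>!k))"
    using \<sigma>(2) unfolding goodp_def by blast
  have ne: "\<sigma> \<noteq> []" using len by (cases \<sigma>) auto
  have l1: "1 < length \<sigma>" using len by linarith
  have hd: "hd \<sigma> = v" using ne s0 by (simp add: hd_conv_nth)
  have p1: "L_parent E \<sigma> (\<sigma>!1) = v"
  proof -
    obtain m where "L_parent E \<sigma> (\<sigma>!1) = \<sigma>!m" "m < 1" using parent_nth[OF d l1, of 0] e1 s0 by auto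
    then show ?thesis using s0 by auto
  qed
  have pk: "L_parent E \<sigma> (\<sigma>!k) \<noteq> v" if k: "2 \<le> k" "k < length \<sigma>" for k
  proof -
    obtain j where j: "1 \<le> j" "j < k" "E (\<sigma>!j) (\<sigma>!k)" using gk k by blast
    then obtain m where m: "L_parent E \<sigma> (\<sigma>!k) = \<sigma>!m" "m < k" "j \<le> m" using parent_nth[OF d k(2), of j] by blast
    have "m < length \<sigma>" "0 < length \<sigma>" using m k by auto
    then have "\<sigma>!m \<noteq> \<sigma>!0" using nth_eq_iff_index_eq[OF d, of m 0] m j by auto
    then show ?thesis using m s0 by auto
  qed
  have ES: "{e \<in> L_tree_edges E \<sigma>. v \<in> e} = {{\<sigma>!1, v}}"
  proof (rule set_eqI, rule iffI)
    fix e assume "e \<in> {e \<in> L_tree_edges E \<sigma>. v \<in> e}"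
    then obtain w where w: "e = {w, L_parent E \<sigma> w}" "w \<in> set \<sigma>" "w \<noteq> hd \<sigma>" "v \<in> e"
      unfolding L_tree_edges_def by blast
    obtain k where k: "k < length \<sigma>" "w = \<sigma>!k" using w(2) by (metis in_set_conv_nth)
    have "k \<noteq> 0"
    proof
      assume "k = 0" then have "w = hd \<sigma>" using k hd s0 by simp
      then show False using w(3) by simp
    qed
    show "e \<in> {{\<sigma>!1, v}}"
    proof (cases "k = 1")
      case True then show ?thesis using w k p1 by auto
    next
      case False
      then have "2 \<le> k" using \<open>k \<noteq> 0\<close> by auto
      then have "L_parent E \<sigma> w \<noteq> v" using pk k by auto
      moreover have "w \<noteq> v" using w hd by auto
      ultimately show ?thesis using w by auto
    qed
  next
    fix e assume "e \<in> {{\<sigma>!1, v}}"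
    then have e: "e = {\<sigma>!1, L_parent E \<sigma> (\<sigma>!1)}" using p1 by auto
    have "\<sigma>!1 \<in> set \<sigma>" using l1 by simp
    moreover have "\<sigma>!1 \<noteq> hd \<sigma>" using hd s0 nth_eq_iff_index_eq[OF d, of 1 0] l1 ne by auto
    ultimately have "e \<in> L_tree_edges E \<sigma>" unfolding L_tree_edges_def e by blast
    then show "e \<in> {e \<in> L_tree_edges E \<sigma>. v \<in> e}" using e p1 by auto
  qed
  have "L_root_leaf E \<sigma> v" unfolding L_root_leaf_def L_leaf_def using ES hd \<sigma>(3) vV by simp
  then show ?thesis using so by blast
qed

theorem theorem2:
  fixes S :: search and V :: "'a set" and E :: "'a \<Rightarrow> 'a \<Rightarrow> bool" and v :: 'a
  assumes "simple_graph V E" and "connected_graph V E" and "card V \<ge> 2" and "v \<in> V"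
  shows "((\<exists>\<sigma>. is_search_ordering S V E \<sigma> \<and> L_root_leaf E \<sigma> v)
            \<longleftrightarrow> (\<exists>\<sigma>. is_search_ordering S V E \<sigma> \<and> L_leaf E \<sigma> v))
       \<and> ((\<exists>\<sigma>. is_search_ordering S V E \<sigma> \<and> L_leaf E \<sigma> v) \<longleftrightarrow> \<not> cut_vertex V E v)"
proof -
  let ?CG = "connected_graph (V - {v}) (\<lambda>a b. E a b \<and> a \<noteq> v \<and> b \<noteq> v)"
  have cut: "\<not> cut_vertex V E v \<longleftrightarrow> ?CG" using assms(4) by (simp add: cut_vertex_def)
  have i_ii: "(\<exists>\<sigma>. is_search_ordering S V E \<sigma> \<and> L_root_leaf E \<sigma> v) \<longrightarrow> (\<exists>\<sigma>. is_search_ordering S V E \<sigma> \<and> L_leaf E \<sigma> v)"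
    by (auto simp: L_root_leaf_def)
  have ii_iii: "(\<exists>\<sigma>. is_search_ordering S V E \<sigma> \<and> L_leaf E \<sigma> v) \<longrightarrow> ?CG"
  proof
    assume "\<exists>\<sigma>. is_search_ordering S V E \<sigma> \<and> L_leaf E \<sigma> v"
    then obtain \<sigma> where "is_search_ordering S V E \<sigma>" "L_leaf E \<sigma> v" by blast
    then show ?CG using leaf_not_cut[OF _ assms(1,2)] by blast
  qed
  have iii_i: "?CG \<longrightarrow> (\<exists>\<sigma>. is_search_ordering S V E \<sigma> \<and> L_root_leaf E \<sigma> v)"
    using root_leaf_exists[OF assms] by blast
  show ?thesis using cut i_ii ii_iii iii_i by blast
qed


end
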